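(* Let $\lambda\in\mathbb{R}$, let $n$ be a positive integer and let $k$ be a positive integer. Then \[ S_{k,\lambda}(n)=\frac{n\,(n+1)_{k,\lambda}}{k+1}-\frac{1}{k+1}\sum_{r=1}^{k-1}(1)_{k+1-r,\lambda}\binom{k}{r-1}S_{r,\lambda}(n)-\frac{\lambda}{k+1}\sum_{r=1}^{k-1}r\binom{k}{r}(1)_{k-r,\lambda}\,S_{r,\lambda}(n). \]
   Context: For $\lambda\in\mathbb{R}$ the degenerate falling factorials are $(x)_{0,\lambda}=1$ and $(x)_{m,\lambda}=x(x-\lambda)(x-2\lambda)\cdots(x-(m-1)\lambda)$ for $m\ge 1$. For positive integers $r,n$, $S_{r,\lambda}(n)=\sum_{j=1}^{n}(j)_{r,\lambda}=(1)_{r,\lambda}+(2)_{r,\lambda}+\cdots+(n)_{r,\lambda}$. *)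

theory Defs
  imports Complex_Main
begin

definition dff :: "real \<Rightarrow> nat \<Rightarrow> real \<Rightarrow> real" where
  "dff x m lam = (\<Prod>i<m. x - real i * lam)"

definition Sdeg :: "nat \<Rightarrow> real \<Rightarrow> nat \<Rightarrow> real" where
  "Sdeg r lam n = (\<Sum>j=1..n. dff (real j) r lam)"

end

theory Submission imports Defs begin

lemma dff_0[simp]: "dff x 0 lam = 1" by (simp add: dff_def)
lemma dff_Suc: "dff x (Suc n) lam = dff x n lam * (x - real n * lam)"
  by (simp add: dff_def)
lemma dff_rec: "dff x (Suc n) lam = x * dff (x - lam) n lam"
proof -
  have "dff x (Suc n) lam = (\<Prod>i<Suc n. x - real i * lam)" by (simp add: dff_def)
  also have "\<dots> = (x - real 0 * lam) * (\<Prod>i<n. x - real (Suc i) * lam)"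
    by (subst prod.lessThan_Suc_shift) simp
  also have "(\<Prod>i<n. x - real (Suc i) * lam) = dff (x - lam) n lam"
    by (simp add: dff_def algebra_simps)
  finally show ?thesis by simp
qed

lemma dff_binom:
  "dff (a + b) n lam = (\<Sum>k\<le>n. real (n choose k) * dff a k lam * dff b (n - k) lam)"
proof (induction n arbitrary: a b)
  case 0
  then show ?case by simp
next
  case (Suc n a b)
  have "(\<Sum>k\<le>Suc n. real (Suc n choose k) * dff a k lam * dff b (Suc n - k) lam) =
      (\<Sum>i\<le>n. real (n choose i) * dff a (Suc i) lam * dff b (n - i) lam) +
      ((\<Sum>i\<le>n. real (n choose Suc i) * dff a (Suc i) lam * dff b (n - i) lam) +
      dff b (Suc n) lam)"
    by (subst sum.atMost_Suc_shift) (simp add: ring_distribs sum.distrib)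
  also have "(\<Sum>i\<le>n. real (n choose i) * dff a (Suc i) lam * dff b (n - i) lam) =
      a * dff ((a - lam) + b) n lam"
    by (subst Suc) (simp add: sum_distrib_left dff_rec mult_ac)
  also have "(\<Sum>i\<le>n. real (n choose Suc i) * dff a (Suc i) lam * dff b (n-i) lam) + dff b (Suc n) lam
           = real (n choose 0) * dff a 0 lam * dff b (Suc n - 0) lam
           + (\<Sum>i = Suc 0..Suc n. real (n choose i) * dff a i lam * dff b (Suc n - i) lam)"
    unfolding sum.shift_bounds_cl_Suc_ivl by (simp add: atLeast0AtMost)
  also have "\<dots> = (\<Sum>i=0..Suc n. real (n choose i) * dff a i lam * dff b (Suc n - i) lam)"
    by (simp add: sum.atLeast_Suc_atMost)
  also have "\<dots> = (\<Sum>i\<le>n. real (n choose i) * dff a i lam * dff b (Suc n - i) lam)"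
    by (intro sum.mono_neutral_right) (auto simp: not_le binomial_eq_0)
  also have "\<dots> = (\<Sum>i\<le>n. real (n choose i) * dff a i lam * dff b (Suc (n - i)) lam)"
    by (intro sum.cong) (simp_all add: Suc_diff_le)
  also have "\<dots> = b * dff (a + (b - lam)) n lam"
    by (subst Suc) (simp add: sum_distrib_left mult_ac dff_rec)
  also have "a * dff ((a - lam) + b) n lam + b * dff (a + (b - lam)) n lam =
      dff (a + b) (Suc n) lam"
    by (simp add: dff_rec algebra_simps)
  finally show ?case ..
qed

lemma x_dff: "x * dff x i lam = dff x (Suc i) lam + real i * lam * dff x i lam"
  by (simp add: dff_Suc algebra_simps)

lemma key:
  fixes x lam :: real
  shows "x * dff (x + 1) (Suc m) lam - (x - 1) * dff x (Suc m) lam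
    = (real (Suc m) + 1) * dff x (Suc m) lam
      + (\<Sum>r=1..m. dff 1 (Suc m + 1 - r) lam * real (Suc m choose (r - 1)) * dff x r lam)
      + lam * (\<Sum>r=1..m. real r * real (Suc m choose r) * dff 1 (Suc m - r) lam * dff x r lam)"
proof -
  let ?k = "Suc m"
  have "x * dff (x + 1) ?k lam = (\<Sum>i\<le>?k. real (?k choose i) * dff 1 (?k - i) lam * (x * dff x i lam))"
    by (simp add: dff_binom sum_distrib_left mult_ac distrib_left)
  also have "\<dots> = (\<Sum>i\<le>?k. real (?k choose i) * dff 1 (?k - i) lam * dff x (Suc i) lam)
      + (\<Sum>i\<le>?k. real (?k choose i) * dff 1 (?k - i) lam * (real i * lam * dff x i lam))"
    by (simp add: x_dff ring_distribs sum.distrib)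
  also have "(\<Sum>i\<le>?k. real (?k choose i) * dff 1 (?k - i) lam * dff x (Suc i) lam)
     = dff x (Suc ?k) lam + real ?k * (1 - 0 * lam) * dff x ?k lam
       + (\<Sum>r=1..m. dff 1 (Suc m + 1 - r) lam * real (Suc m choose (r - 1)) * dff x r lam)"
  proof -
    have "(\<Sum>i\<le>?k. real (?k choose i) * dff 1 (?k - i) lam * dff x (Suc i) lam)
       = (\<Sum>i<m. real (?k choose i) * dff 1 (?k - i) lam * dff x (Suc i) lam)
         + real ?k * dff 1 1 lam * dff x ?k lam + dff x (Suc ?k) lam"
      by (simp add: lessThan_Suc_atMost[symmetric])
    moreover have "(\<Sum>i<m. real (?k choose i) * dff 1 (?k - i) lam * dff x (Suc i) lam)
       = (\<Sum>r=1..m. dff 1 (Suc m + 1 - r) lam * real (Suc m choose (r - 1)) * dff x r lam)"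
    proof -
      have "(\<Sum>r=1..m. dff 1 (Suc m + 1 - r) lam * real (Suc m choose (r - 1)) * dff x r lam)
          = (\<Sum>i=0..<m. dff 1 (Suc m + 1 - Suc i) lam * real (Suc m choose (Suc i - 1)) * dff x (Suc i) lam)"
        unfolding atLeastLessThanSuc_atLeastAtMost[symmetric] by (simp only: One_nat_def sum.shift_bounds_Suc_ivl)
      then show ?thesis by (simp add: atLeast0LessThan mult_ac)
    qed
    moreover have "dff 1 1 lam = 1" by (simp add: dff_def)
    ultimately show ?thesis by simp
  qed
  also have "(\<Sum>i\<le>?k. real (?k choose i) * dff 1 (?k - i) lam * (real i * lam * dff x i lam))
     = real ?k * lam * dff x ?k lam
       + lam * (\<Sum>r=1..m. real r * real (Suc m choose r) * dff 1 (Suc m - r) lam * dff x r lam)"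
  proof -
    have "(\<Sum>i\<le>?k. real (?k choose i) * dff 1 (?k - i) lam * (real i * lam * dff x i lam))
      = (\<Sum>i\<le>m. real (?k choose i) * dff 1 (?k - i) lam * (real i * lam * dff x i lam))
        + real ?k * lam * dff x ?k lam"
      by simp
    moreover have "(\<Sum>i\<le>m. real (?k choose i) * dff 1 (?k - i) lam * (real i * lam * dff x i lam))
       = (\<Sum>i=1..m. real (?k choose i) * dff 1 (?k - i) lam * (real i * lam * dff x i lam))"
      by (intro sum.mono_neutral_right) auto
    ultimately show ?thesis by (simp add: sum_distrib_left mult_ac)
  qed
  finally have A: "x * dff (x + 1) ?k lam = dff x (Suc ?k) lam + real ?k * (1 - 0 * lam) * dff x ?k lam
       + (\<Sum>r=1..m. dff 1 (Suc m + 1 - r) lam * real (Suc m choose (r - 1)) * dff x r lam)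
       + (real ?k * lam * dff x ?k lam
       + lam * (\<Sum>r=1..m. real r * real (Suc m choose r) * dff 1 (Suc m - r) lam * dff x r lam))" .
  have B: "(x - 1) * dff x ?k lam = dff x (Suc ?k) lam + real ?k * lam * dff x ?k lam - dff x ?k lam"
    using x_dff[of x ?k lam] by (simp add: algebra_simps)
  show ?thesis using A B by (simp add: algebra_simps)
qed

lemma Sdeg_0[simp]: "Sdeg r lam 0 = 0" by (simp add: Sdeg_def)
lemma Sdeg_Suc: "Sdeg r lam (Suc n) = Sdeg r lam n + dff (real n + 1) r lam"
  by (simp add: Sdeg_def add.commute)

lemma main:
  fixes lam :: real and n m :: nat
  shows "Sdeg (Suc m) lam n =
    real n * dff (real n + 1) (Suc m) lam / (real (Suc m) + 1)
    - (1 / (real (Suc m) + 1)) * (\<Sum>r=1..Suc m-1. dff 1 (Suc m + 1 - r) lam * real (Suc m choose (r - 1)) * Sdeg r lam n)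
    - (lam / (real (Suc m) + 1)) * (\<Sum>r=1..Suc m-1. real r * real (Suc m choose r) * dff 1 (Suc m - r) lam * Sdeg r lam n)"
proof (induction n)
  case 0
  then show ?case by simp
next
  case (Suc n)
  let ?k = "Suc m"
  define x where "x = real n + 1"
  have K: "x * dff (x + 1) ?k lam - (x - 1) * dff x ?k lam
    = (real ?k + 1) * dff x ?k lam
      + (\<Sum>r=1..m. dff 1 (Suc m + 1 - r) lam * real (Suc m choose (r - 1)) * dff x r lam)
      + lam * (\<Sum>r=1..m. real r * real (Suc m choose r) * dff 1 (Suc m - r) lam * dff x r lam)"
    by (rule key)
  have S1: "(\<Sum>r=1..m. dff 1 (Suc m + 1 - r) lam * real (Suc m choose (r - 1)) * Sdeg r lam (Suc n))
     = (\<Sum>r=1..m. dff 1 (Suc m + 1 - r) lam * real (Suc m choose (r - 1)) * Sdeg r lam n)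
     + (\<Sum>r=1..m. dff 1 (Suc m + 1 - r) lam * real (Suc m choose (r - 1)) * dff x r lam)"
    by (simp add: Sdeg_Suc x_def ring_distribs sum.distrib)
  have S2: "(\<Sum>r=1..m. real r * real (Suc m choose r) * dff 1 (Suc m - r) lam * Sdeg r lam (Suc n))
     = (\<Sum>r=1..m. real r * real (Suc m choose r) * dff 1 (Suc m - r) lam * Sdeg r lam n)
     + (\<Sum>r=1..m. real r * real (Suc m choose r) * dff 1 (Suc m - r) lam * dff x r lam)"
    by (simp add: Sdeg_Suc x_def ring_distribs sum.distrib)
  have E: "Sdeg ?k lam (Suc n) = Sdeg ?k lam n + dff x ?k lam"
    by (simp add: Sdeg_Suc x_def)
  have xs: "real (Suc n) = x" "real n = x - 1" by (simp_all add: x_def)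
  have pos: "real ?k + 1 > 0" by simp
  have IH: "Sdeg ?k lam n =
    (x - 1) * dff x ?k lam / (real ?k + 1)
    - (1 / (real ?k + 1)) * (\<Sum>r=1..m. dff 1 (Suc m + 1 - r) lam * real (Suc m choose (r - 1)) * Sdeg r lam n)
    - (lam / (real ?k + 1)) * (\<Sum>r=1..m. real r * real (Suc m choose r) * dff 1 (Suc m - r) lam * Sdeg r lam n)"
    using Suc.IH by (simp add: x_def)
  have alg: "\<And>(c::real) Sn x Dx D1 T1 T2 U1 U2. c > 0 \<Longrightarrow> Sn = (x - 1) * Dx / c - 1/c * T1 - lam/c * T2 \<Longrightarrow>
     x*D1 - (x-1)*Dx = c*Dx + U1 + lam*U2 \<Longrightarrow>
     Sn + Dx = x*D1/c - 1/c * (T1+U1) - lam/c*(T2+U2)"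
  proof -
    fix c Sn x Dx D1 T1 T2 U1 U2 :: real
    assume c: "c > 0" and h2: "Sn = (x - 1) * Dx / c - 1/c * T1 - lam/c * T2"
      and h3: "x*D1 - (x-1)*Dx = c*Dx + U1 + lam*U2"
    have h2': "Sn = ((x-1)*Dx - T1 - lam*T2)/c" using h2 by (simp add: diff_divide_distrib)
    have e1: "Sn + Dx = ((x-1)*Dx - T1 - lam*T2 + c*Dx)/c" unfolding h2' using c by (simp add: add_divide_distrib)
    have e2: "x*D1/c - 1/c*(T1+U1) - lam/c*(T2+U2) = (x*D1 - (T1+U1) - lam*(T2+U2))/c"
      by (simp add: diff_divide_distrib)
    have "(x-1)*Dx - T1 - lam*T2 + c*Dx = x*D1 - (T1+U1) - lam*(T2+U2)" using h3 by (simp add: algebra_simps)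
    then show "Sn + Dx = x*D1/c - 1/c * (T1+U1) - lam/c*(T2+U2)" using e1 e2 by simp
  qed
  have "Sdeg ?k lam (Suc n) =
    x * dff (x + 1) ?k lam / (real ?k + 1)
    - (1 / (real ?k + 1)) * (\<Sum>r=1..m. dff 1 (Suc m + 1 - r) lam * real (Suc m choose (r - 1)) * Sdeg r lam (Suc n))
    - (lam / (real ?k + 1)) * (\<Sum>r=1..m. real r * real (Suc m choose r) * dff 1 (Suc m - r) lam * Sdeg r lam (Suc n))"
    unfolding E S1 S2 by (rule alg[OF pos IH K])
  then show ?case by (simp add: x_def add.commute)
qed

theorem theorem3p2:
  fixes lam :: real and n k :: nat
  assumes "n \<ge> 1" and "k \<ge> 1"
  shows "Sdeg k lam n =
    real n * dff (real n + 1) k lam / (real k + 1)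
    - (1 / (real k + 1)) * (\<Sum>r=1..k-1. dff 1 (k + 1 - r) lam * real (k choose (r - 1)) * Sdeg r lam n)
    - (lam / (real k + 1)) * (\<Sum>r=1..k-1. real r * real (k choose r) * dff 1 (k - r) lam * Sdeg r lam n)"
proof -
  obtain m where "k = Suc m" using assms(2) by (cases k) auto
  then show ?thesis using main[of m lam n] by simp
qed

end
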